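(* Assume $r_0>-\infty$ and $\mathbb E[(\min\{t_1^+,\dots,t_{2d}^+\})^d]<\infty$. For $\diamond\in\{\text{none},o\}$ and $|\xi|_1=1$, the radial limit $g^\diamond(\xi)=\lim_{t\nearrow1}g^\diamond(t\xi)$ extends both shape functions to all of $\mathcal U$. The resulting functions $g:\mathcal U\to[r_0,\infty]$ and $g^o:\mathcal U\to[r_0\wedge0,\infty]$ are both convex and lower semicontinuous.
   Context: Let $d\ge2$. The edge weights $\{t(e)\}$ on the undirected nearest-neighbor edges of $\mathbb Z^d$ are i.i.d. real, and $t_i$ are i.i.d. copies with $t_i^+=t_i\vee 0$. Set $r_0=\operatorname{ess\,inf}t(e)$, $\mathcal U=\{\xi\in\mathbb R^d:|\xi|_1\le1\}$, and $\operatorname{int}\mathcal U=\{|\xi|_1<1\}$. For paths $(x_0,\dots,x_n)$ with steps in $\mathcal R=\{\pm e_i\}$ (respectively in $\mathcal R^o=\mathcal R\cup\{0\}$, where zero steps have weight $0$), let $G_{0,(n),x}$ (respectively $G^o_{0,(n),x}$) be the minimal passage time over such $n$-step paths from $0$ to $x$. Let $\mathcal D_n$ (respectively $\mathcal D^o_n$) be the set of points reachable by such $n$-step paths. Under the hypotheses, there are deterministic continuous convex functions $g,g^o$ on $\operatorname{int}\mathcal U$ (the restricted path-length shape functions, written $g^\diamond$ with $g^{\text{none}}=g$) such that almost surely, for all $\xi$, all $\alpha>|\xi|_1$ and all $k_n\to\infty$ with $k_n/n\to\alpha$, $x_n\in\mathcal D_{k_n}$, $y_n\in\mathcal D^o_{k_n}$,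 $x_n/n\to\xi$, $y_n/n\to\xi$: $$n^{-1}G_{0,(k_n),x_n}\to\alpha g(\xi/\alpha)\quad\text{and}\quad n^{-1}G^o_{0,(k_n),y_n}\to\alpha g^o(\xi/\alpha).$$ *)

theory Defs
  imports "HOL-Probability.Probability"
begin

text \<open>Lattice points of Z^d are vectors of type int^'n, d = CARD('n).
  The undirected nearest-neighbour edge {x, x + e_i} is indexed by the pair (x, i).\<close>

type_synonym 'n edge = "(int ^ 'n) \<times> 'n"

definition unitv :: "'n::finite \<Rightarrow> int ^ 'n" where
  "unitv i = (\<chi> j. if j = i then 1 else 0)"

text \<open>A step is an optional signed unit vector: Some (i, True) = +e_i, Some (i, False) = -e_i,
  None = the zero step.  R = range Some, R^o = UNIV.\<close>

type_synonym 'n step = "('n \<times> bool) option"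

definition stepR :: "'n step set" where "stepR = range Some"
definition stepRo :: "'n step set" where "stepRo = UNIV"

fun stepv :: "'n::finite step \<Rightarrow> int ^ 'n" where
  "stepv None = 0"
| "stepv (Some (i, b)) = (if b then unitv i else - unitv i)"

fun stepw :: "('n edge \<Rightarrow> real) \<Rightarrow> int ^ 'n \<Rightarrow> 'n::finite step \<Rightarrow> real" where
  "stepw t x None = 0"
| "stepw t x (Some (i, b)) = (if b then t (x, i) else t (x - unitv i, i))"

fun endpt :: "int ^ 'n \<Rightarrow> 'n::finite step list \<Rightarrow> int ^ 'n" where
  "endpt x [] = x"
| "endpt x (s # ss) = endpt (x + stepv s) ss"

fun pathw :: "('n edge \<Rightarrow> real) \<Rightarrow> int ^ 'n \<Rightarrow> 'n::finite step list \<Rightarrow> real" where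
  "pathw t x [] = 0"
| "pathw t x (s # ss) = stepw t x s + pathw t (x + stepv s) ss"

definition paths :: "'n::finite step set \<Rightarrow> nat \<Rightarrow> int ^ 'n \<Rightarrow> 'n step list set" where
  "paths S n x = {ss. length ss = n \<and> set ss \<subseteq> S \<and> endpt 0 ss = x}"

definition reach :: "'n::finite step set \<Rightarrow> nat \<Rightarrow> (int ^ 'n) set" where
  "reach S n = {x. paths S n x \<noteq> {}}"

definition Gpt :: "'n::finite step set \<Rightarrow> ('n edge \<Rightarrow> real) \<Rightarrow> nat \<Rightarrow> int ^ 'n \<Rightarrow> real" where
  "Gpt S t n x = Min (pathw t 0 ` paths S n x)"

definition l1norm :: "real ^ 'n::finite \<Rightarrow> real" where
  "l1norm \<xi> = (\<Sum>i\<in>UNIV. \<bar>\<xi> $ i\<bar>)"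

definition toR :: "int ^ 'n::finite \<Rightarrow> real ^ 'n" where
  "toR x = (\<chi> i. real_of_int (x $ i))"

definition Uset :: "(real ^ 'n::finite) set" where
  "Uset = {\<xi>. l1norm \<xi> \<le> 1}"

definition intU :: "(real ^ 'n::finite) set" where
  "intU = {\<xi>. l1norm \<xi> < 1}"

text \<open>The 2d edges incident to the origin (the i.i.d. copies t_1,...,t_{2d}).\<close>
definition edges0 :: "'n::finite edge set" where
  "edges0 = (\<lambda>i. (0, i)) ` UNIV \<union> (\<lambda>i. (- unitv i, i)) ` UNIV"

definition is_shape_fn ::
  "'a measure \<Rightarrow> ('n::finite edge \<Rightarrow> 'a \<Rightarrow> real) \<Rightarrow> 'n step set \<Rightarrow> (real ^ 'n \<Rightarrow> real) \<Rightarrow> bool" where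
  "is_shape_fn M T S g \<longleftrightarrow>
     (AE \<omega> in M. \<forall>\<xi> \<alpha> (k::nat \<Rightarrow> nat) (x::nat \<Rightarrow> int ^ 'n).
        \<alpha> > l1norm \<xi> \<and> filterlim k at_top sequentially
        \<and> (\<lambda>n. real (k n) / real n) \<longlonglongrightarrow> \<alpha>
        \<and> (\<forall>n. x n \<in> reach S (k n))
        \<and> (\<lambda>n. (1 / real n) *\<^sub>R toR (x n)) \<longlonglongrightarrow> \<xi>
        \<longrightarrow> (\<lambda>n. Gpt S (\<lambda>e. T e \<omega>) (k n) (x n) / real n) \<longlonglongrightarrow> \<alpha> * g ((1 / \<alpha>) *\<^sub>R \<xi>))"

definition ext_shape :: "(real ^ 'n::finite \<Rightarrow> real) \<Rightarrow> real ^ 'n \<Rightarrow> ereal" where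
  "ext_shape g \<xi> = (if l1norm \<xi> < 1 then ereal (g \<xi>)
                    else Lim (at_left 1) (\<lambda>t. ereal (g (t *\<^sub>R \<xi>))))"

definition convex_ereal_on :: "(real ^ 'n::finite) set \<Rightarrow> (real ^ 'n \<Rightarrow> ereal) \<Rightarrow> bool" where
  "convex_ereal_on A f \<longleftrightarrow> (\<forall>x\<in>A. \<forall>y\<in>A. \<forall>a::real. 0 < a \<and> a < 1 \<longrightarrow>
      f ((1 - a) *\<^sub>R x + a *\<^sub>R y) \<le> ereal (1 - a) * f x + ereal a * f y)"

definition lsc_on :: "(real ^ 'n::finite) set \<Rightarrow> (real ^ 'n \<Rightarrow> ereal) \<Rightarrow> bool" where
  "lsc_on A f \<longleftrightarrow> (\<forall>x\<in>A. \<forall>c. c < f x \<longrightarrow> (\<forall>\<^sub>F y in at x within A. c < f y))"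

end

theory Submission
  imports Defs
begin


lemma l1norm_scale: "l1norm (c *\<^sub>R x) = \<bar>c\<bar> * l1norm x"
  by (simp add: l1norm_def abs_mult sum_distrib_left)

lemma l1norm_add: "l1norm (x + y) \<le> l1norm x + l1norm y"
  unfolding l1norm_def sum.distrib[symmetric] by (intro sum_mono) (simp add: abs_triangle_ineq)

lemma l1norm_nonneg: "0 \<le> l1norm x"
  by (simp add: l1norm_def sum_nonneg)

lemma l1norm_zero[simp]: "l1norm 0 = 0"
  by (simp add: l1norm_def)

lemma cont_l1norm: "continuous_on UNIV l1norm"
  unfolding l1norm_def by (intro continuous_intros)

lemma open_intU: "open (intU :: (real ^ 'n::finite) set)"
  unfolding intU_def by (intro open_Collect_less continuous_intros cont_l1norm)

lemma zero_intU: "0 \<in> intU" by (simp add: intU_def)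

lemma scale_intU: "l1norm x \<le> 1 \<Longrightarrow> 0 \<le> t \<Longrightarrow> t < 1 \<Longrightarrow> t *\<^sub>R x \<in> intU"
proof -
  assume a: "l1norm x \<le> 1" "0 \<le> t" "t < 1"
  have "t * l1norm x \<le> t * 1" using a by (intro mult_left_mono) auto
  then show ?thesis using a by (simp add: intU_def l1norm_scale)
qed

lemma Uset_scale: "\<xi> \<in> Uset \<Longrightarrow> 0 \<le> t \<Longrightarrow> t < 1 \<Longrightarrow> t *\<^sub>R \<xi> \<in> intU"
  by (simp add: Uset_def scale_intU)

lemma slope_mono:
  fixes g :: "real ^ 'n::finite \<Rightarrow> real"
  assumes cvx: "convex_on intU g" and xi: "l1norm \<xi> \<le> 1"
    and st: "0 < s" "s < t" "t < 1"
  shows "(g (s *\<^sub>R \<xi>) - g 0) / s \<le> (g (t *\<^sub>R \<xi>) - g 0) / t"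
proof -
  have e: "s *\<^sub>R \<xi> = (1 - s/t) *\<^sub>R 0 + (s/t) *\<^sub>R (t *\<^sub>R \<xi>)"
    using st by simp
  have "g (s *\<^sub>R \<xi>) \<le> (1 - s/t) * g 0 + (s/t) * g (t *\<^sub>R \<xi>)"
    unfolding e using st xi
    by (intro convex_onD[OF cvx]) (auto simp: zero_intU scale_intU)
  then have "g (s *\<^sub>R \<xi>) - g 0 \<le> (s/t) * (g (t *\<^sub>R \<xi>) - g 0)"
    by (simp add: algebra_simps)
  then have "(g (s *\<^sub>R \<xi>) - g 0) / s \<le> (s/t) * (g (t *\<^sub>R \<xi>) - g 0) / s"
    using st by (intro divide_right_mono) auto
  also have "\<dots> = (g (t *\<^sub>R \<xi>) - g 0) / t" using st by simp
  finally show ?thesis .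
qed

lemma radial_lim:
  fixes g :: "real ^ 'n::finite \<Rightarrow> real"
  assumes cvx: "convex_on intU g" and cont: "continuous_on intU g"
    and xi: "\<xi> \<in> Uset"
  shows "((\<lambda>t. ereal (g (t *\<^sub>R \<xi>))) \<longlongrightarrow> ext_shape g \<xi>) (at_left 1)"
proof (cases "l1norm \<xi> < 1")
  case True
  then have xin: "\<xi> \<in> intU" by (simp add: intU_def)
  have ic: "isCont g \<xi>"
    by (metis cont xin open_intU continuous_on_eq_continuous_at)
  have "((\<lambda>t. t *\<^sub>R \<xi>) \<longlongrightarrow> 1 *\<^sub>R \<xi>) (at_left (1::real))"
    by (intro tendsto_intros)
  then have "((\<lambda>t. g (t *\<^sub>R \<xi>)) \<longlongrightarrow> g \<xi>) (at_left (1::real))"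
    using isCont_tendsto_compose[OF ic] by simp
  then show ?thesis using True by (simp add: ext_shape_def)
next
  case False
  have x1: "l1norm \<xi> \<le> 1" using xi by (simp add: Uset_def)
  define h where "h t = (g (t *\<^sub>R \<xi>) - g 0) / t" for t
  define L where "L = (SUP t\<in>{0<..<1::real}. ereal (h t))"
  have ev01: "\<forall>\<^sub>F t in at_left (1::real). t \<in> {0<..<1}"
    by (rule eventually_at_left_real) simp
  have hL: "((\<lambda>t. ereal (h t)) \<longlongrightarrow> L) (at_left 1)"
  proof (rule increasing_tendsto)
    show "\<forall>\<^sub>F t in at_left 1. ereal (h t) \<le> L"
      using ev01 by eventually_elim (auto simp: L_def intro: SUP_upper)
  next
    fix x assume "x < L"
    then obtain t1 where t1: "t1 \<in> {0<..<1}" "x < ereal (h t1)"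
      unfolding L_def less_SUP_iff by blast
    have "\<forall>\<^sub>F t in at_left (1::real). t \<in> {t1<..<1}"
      using t1 by (intro eventually_at_left_real) simp
    then show "\<forall>\<^sub>F t in at_left 1. x < ereal (h t)"
    proof eventually_elim
      case (elim t)
      then have "h t1 \<le> h t" unfolding h_def using t1
        by (intro slope_mono[OF cvx x1]) auto
      then show ?case using t1 by (meson ereal_less_eq(3) less_le_trans)
    qed
  qed
  have Lfin: "L \<noteq> - \<infinity>"
  proof -
    have "ereal (h (1/2)) \<le> L" unfolding L_def by (rule SUP_upper) auto
    then show ?thesis by auto
  qed
  have "((\<lambda>t. ereal (g 0) + ereal t * ereal (h t)) \<longlongrightarrow> ereal (g 0) + ereal 1 * L) (at_left 1)"
    by (intro tendsto_add_ereal_general2 tendsto_mult_ereal hL tendsto_const)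
       (auto intro!: tendsto_intros)
  moreover have "\<forall>\<^sub>F t in at_left 1. ereal (g 0) + ereal t * ereal (h t) = ereal (g (t *\<^sub>R \<xi>))"
      using ev01 by eventually_elim (simp add: h_def)
  ultimately have lim: "((\<lambda>t. ereal (g (t *\<^sub>R \<xi>))) \<longlongrightarrow> ereal (g 0) + L) (at_left 1)"
    using Lim_transform_eventually by fastforce
  then show ?thesis using False
    by (simp add: ext_shape_def tendsto_Lim[OF trivial_limit_at_left_real lim])
qed

lemma cvx_LB:
  fixes g :: "real ^ 'n::finite \<Rightarrow> real"
  assumes cvx: "convex_on intU g"
    and rho: "0 < \<rho>" "\<And>w. norm w < \<rho> \<Longrightarrow> w \<in> intU \<and> g w \<le> K"
    and s: "0 < s" "s < 1" and z: "z \<in> intU" and d: "dist z \<xi> < \<rho> * (1 - s)"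
  shows "g (s *\<^sub>R \<xi>) \<le> s * g z + (1 - s) * K"
proof -
  define w where "w = (s / (1 - s)) *\<^sub>R (\<xi> - z)"
  have "norm w = (s / (1 - s)) * dist z \<xi>"
    using s by (simp add: w_def dist_norm norm_minus_commute)
  also have "\<dots> < (s / (1 - s)) * (\<rho> * (1 - s))"
    using s d by (intro mult_strict_left_mono) auto
  also have "\<dots> = s * \<rho>" using s by simp
  also have "\<dots> < \<rho>" using s rho by simp
  finally have w: "w \<in> intU" "g w \<le> K" using rho by auto
  have "(1 - s) *\<^sub>R w = s *\<^sub>R (\<xi> - z)" using s by (simp add: w_def)
  then have e: "s *\<^sub>R \<xi> = (1 - s) *\<^sub>R w + s *\<^sub>R z"
    by (simp add: algebra_simps)
  have "g (s *\<^sub>R \<xi>) \<le> (1 - s) * g w + s * g z"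
    unfolding e using s w z by (intro convex_onD[OF cvx]) auto
  also have "\<dots> \<le> (1 - s) * K + s * g z"
    using s w by (intro add_right_mono mult_left_mono) auto
  finally show ?thesis by simp
qed

lemma ext_props:
  fixes g :: "real ^ 'n::finite \<Rightarrow> real"
  assumes cvx: "convex_on intU g" and cont: "continuous_on intU g"
    and lb: "\<And>\<xi>. \<xi> \<in> intU \<Longrightarrow> c \<le> g \<xi>"
  shows "(\<forall>\<xi>. l1norm \<xi> = 1 \<longrightarrow> (\<exists>L. ((\<lambda>t. ereal (g (t *\<^sub>R \<xi>))) \<longlongrightarrow> L) (at_left 1)))"
    and "\<forall>\<xi>\<in>Uset. ereal c \<le> ext_shape g \<xi>"
    and "convex_ereal_on Uset (ext_shape g)"
    and "lsc_on Uset (ext_shape g)"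
proof -
  note RL = radial_lim[OF cvx cont]
  have ev01: "\<forall>\<^sub>F t in at_left (1::real). t \<in> {0<..<1}"
    by (rule eventually_at_left_real) simp
  show "\<forall>\<xi>. l1norm \<xi> = 1 \<longrightarrow> (\<exists>L. ((\<lambda>t. ereal (g (t *\<^sub>R \<xi>))) \<longlongrightarrow> L) (at_left 1))"
  proof (intro allI impI)
    fix \<xi> :: "real ^ 'n" assume "l1norm \<xi> = 1"
    then have "\<xi> \<in> Uset" by (simp add: Uset_def)
    then show "\<exists>L. ((\<lambda>t. ereal (g (t *\<^sub>R \<xi>))) \<longlongrightarrow> L) (at_left 1)" using RL by blast
  qed
  show LB: "\<forall>\<xi>\<in>Uset. ereal c \<le> ext_shape g \<xi>"
  proof
    fix \<xi> :: "real ^ 'n" assume xi: "\<xi> \<in> Uset"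
    show "ereal c \<le> ext_shape g \<xi>"
    proof (rule tendsto_lowerbound[OF RL[OF xi]])
      show "\<forall>\<^sub>F t in at_left 1. ereal c \<le> ereal (g (t *\<^sub>R \<xi>))"
        using ev01 by eventually_elim (use xi in \<open>auto intro!: lb Uset_scale\<close>)
    qed (rule trivial_limit_at_left_real)
  qed
  have nm: "ext_shape g \<xi> \<noteq> - \<infinity>" if "\<xi> \<in> Uset" for \<xi>
    using LB that by (metis MInfty_neq_ereal(1) ereal_infty_less_eq2(2))
  have U1: "l1norm x \<le> 1" if "x \<in> Uset" for x using that by (simp add: Uset_def)
  show "convex_ereal_on Uset (ext_shape g)"
    unfolding convex_ereal_on_def
  proof (intro ballI allI impI)
    fix x y :: "real ^ 'n" and a :: real
    assume x: "x \<in> Uset" and y: "y \<in> Uset" and a: "0 < a \<and> a < 1"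
    define z where "z = (1 - a) *\<^sub>R x + a *\<^sub>R y"
    have "l1norm z \<le> l1norm ((1 - a) *\<^sub>R x) + l1norm (a *\<^sub>R y)"
      unfolding z_def by (rule l1norm_add)
    also have "\<dots> = (1 - a) * l1norm x + a * l1norm y"
      using a by (simp add: l1norm_scale)
    also have "\<dots> \<le> (1 - a) * 1 + a * 1"
      using a U1[OF x] U1[OF y] by (intro add_mono mult_left_mono) auto
    finally have z: "z \<in> Uset" by (simp add: Uset_def)
    have lim2: "((\<lambda>t. ereal (1 - a) * ereal (g (t *\<^sub>R x)) + ereal a * ereal (g (t *\<^sub>R y)))
        \<longlongrightarrow> ereal (1 - a) * ext_shape g x + ereal a * ext_shape g y) (at_left 1)"
    proof (intro tendsto_add_ereal_general tendsto_cmult_ereal RL x y)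
      have "ereal (1 - a) * ext_shape g x \<noteq> - \<infinity>" "ereal a * ext_shape g y \<noteq> - \<infinity>"
        using nm[OF x] nm[OF y] a by (auto simp: ereal_mult_eq_MInfty)
      then show "\<not> (ereal (1 - a) * ext_shape g x = \<infinity> \<and> ereal a * ext_shape g y = - \<infinity> \<or>
          ereal (1 - a) * ext_shape g x = - \<infinity> \<and> ereal a * ext_shape g y = \<infinity>)" by auto
    qed auto
    show "ext_shape g z \<le> ereal (1 - a) * ext_shape g x + ereal a * ext_shape g y"
    proof (rule tendsto_le[OF trivial_limit_at_left_real lim2 RL[OF z]])
      show "\<forall>\<^sub>F t in at_left 1. ereal (g (t *\<^sub>R z)) \<le>
          ereal (1 - a) * ereal (g (t *\<^sub>R x)) + ereal a * ereal (g (t *\<^sub>R y))"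
        using ev01
      proof eventually_elim
        case (elim t)
        have e: "t *\<^sub>R z = (1 - a) *\<^sub>R (t *\<^sub>R x) + a *\<^sub>R (t *\<^sub>R y)"
          by (simp add: z_def algebra_simps)
        have "g (t *\<^sub>R z) \<le> (1 - a) * g (t *\<^sub>R x) + a * g (t *\<^sub>R y)"
          unfolding e using a elim x y by (intro convex_onD[OF cvx]) (auto intro: Uset_scale)
        then show ?case by simp
      qed
    qed
  qed
  show "lsc_on Uset (ext_shape g)"
    unfolding lsc_on_def
  proof (intro ballI allI impI)
    fix \<xi> :: "real ^ 'n" and c0 :: ereal
    assume xi: "\<xi> \<in> Uset" and c0: "c0 < ext_shape g \<xi>"
    show "\<forall>\<^sub>F y in at \<xi> within Uset. c0 < ext_shape g y"
    proof (cases "c0 = - \<infinity>")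
      case True
      then show ?thesis using nm by (auto simp: eventually_at_filter)
    next
      case False
      then obtain cr where cr: "c0 = ereal cr" using c0 by (cases c0) auto
      obtain c2 where c2: "ereal cr < ereal c2" "ereal c2 < ext_shape g \<xi>"
        using c0 cr ereal_dense2 by (metis)
      have ic: "isCont g 0"
        by (metis cont zero_intU open_intU continuous_on_eq_continuous_at)
      obtain r1 where r1: "r1 > 0" "ball (0::real^'n) r1 \<subseteq> intU"
        using open_intU zero_intU by (meson openE)
      obtain r2 where r2: "r2 > 0" "\<And>w. dist w 0 < r2 \<Longrightarrow> dist (g w) (g 0) < 1"
        using ic unfolding continuous_at_eps_delta by (meson zero_less_one)
      define \<rho> where "\<rho> = min r1 r2"
      define K where "K = g 0 + 1"
      have rho: "0 < \<rho>" "\<And>w. norm w < \<rho> \<Longrightarrow> w \<in> intU \<and> g w \<le> K"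
      proof -
        show "0 < \<rho>" using r1 r2 by (simp add: \<rho>_def)
        fix w :: "real ^ 'n" assume "norm w < \<rho>"
        then have "dist w 0 < r1" "dist w 0 < r2" by (auto simp: \<rho>_def)
        moreover have "w \<in> ball 0 r1" using \<open>dist w 0 < r1\<close> by (simp add: dist_commute)
        then have "w \<in> intU" using r1(2) by blast
        ultimately show "w \<in> intU \<and> g w \<le> K"
          using r2(2)[of w] by (auto simp: K_def dist_real_def)
      qed
      have e1: "\<forall>\<^sub>F s in at_left 1. ereal c2 < ereal (g (s *\<^sub>R \<xi>))"
        using order_tendstoD(1)[OF RL[OF xi] c2(2)] .
      have "((\<lambda>s. (c2 - (1 - s) * K) / s) \<longlongrightarrow> (c2 - (1 - 1) * K) / 1) (at_left (1::real))"
        by (intro tendsto_intros) auto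
      then have e2: "\<forall>\<^sub>F s in at_left 1. cr < (c2 - (1 - s) * K) / s"
        using c2(1) by (intro order_tendstoD(1)) auto
      have "\<forall>\<^sub>F s in at_left (1::real). s \<in> {0<..<1} \<and> ereal c2 < ereal (g (s *\<^sub>R \<xi>))
          \<and> cr < (c2 - (1 - s) * K) / s"
        using ev01 e1 e2 by eventually_elim auto
      moreover have "at_left (1::real) \<noteq> bot" by (rule trivial_limit_at_left_real)
      ultimately obtain s where "s \<in> {0<..<1}" "ereal c2 < ereal (g (s *\<^sub>R \<xi>))"
          "cr < (c2 - (1 - s) * K) / s"
        using eventually_happens by blast
      then have s: "0 < s" "s < 1" "c2 < g (s *\<^sub>R \<xi>)" "cr < (c2 - (1 - s) * K) / s"
        by auto
      define B where "B = (c2 - (1 - s) * K) / s"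
      have B: "B \<le> g z" if "z \<in> intU" "dist z \<xi> < \<rho> * (1 - s)" for z
      proof -
        have "g (s *\<^sub>R \<xi>) \<le> s * g z + (1 - s) * K"
          using cvx_LB[OF cvx rho s(1,2) that] .
        then have "c2 - (1 - s) * K \<le> s * g z" using s by simp
        then have "c2 - (1 - s) * K \<le> g z * s" by (simp add: mult.commute)
        then show ?thesis using s by (simp add: B_def pos_divide_le_eq)
      qed
      have dpos: "0 < \<rho> * (1 - s)" using rho s by simp
      show ?thesis unfolding eventually_at
      proof (intro exI conjI ballI impI, rule dpos)
        fix y assume y: "y \<in> Uset" and yd: "y \<noteq> \<xi> \<and> dist y \<xi> < \<rho> * (1 - s)"
        have "((\<lambda>t. dist (t *\<^sub>R y) \<xi>) \<longlongrightarrow> dist (1 *\<^sub>R y) \<xi>) (at_left (1::real))"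
          by (intro tendsto_intros)
        then have ed: "\<forall>\<^sub>F t in at_left (1::real). dist (t *\<^sub>R y) \<xi> < \<rho> * (1 - s)"
          using yd by (intro order_tendstoD(2)) auto
        have "ereal B \<le> ext_shape g y"
        proof (rule tendsto_lowerbound[OF RL[OF y]])
          show "\<forall>\<^sub>F t in at_left 1. ereal B \<le> ereal (g (t *\<^sub>R y))"
            using ev01 ed
          proof eventually_elim
            case (elim t)
            then have "t *\<^sub>R y \<in> intU" by (intro Uset_scale[OF y]) auto
            then show ?case using B elim by simp
          qed
        qed (rule trivial_limit_at_left_real)
        moreover have "ereal cr < ereal B" using s(4) by (simp add: B_def)
        ultimately show "c0 < ext_shape g y" using cr less_le_trans by blast
      qed
    qed
  qed
qed



lemma endpt_append: "endpt x (ss @ ts) = endpt (endpt x ss) ts"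
  by (induction ss arbitrary: x) auto

lemma pathw_lb:
  assumes "\<And>s x. s \<in> set ss \<Longrightarrow> m \<le> stepw t x s"
  shows "real (length ss) * m \<le> pathw t x ss"
  using assms
proof (induction ss arbitrary: x)
  case Nil then show ?case by simp
next
  case (Cons s ss)
  have "m \<le> stepw t x s" using Cons.prems by simp
  moreover have "real (length ss) * m \<le> pathw t (x + stepv s) ss"
    using Cons by simp
  ultimately show ?case by (simp add: algebra_simps)
qed

lemma stepw_lbR: "(\<And>e. r \<le> t e) \<Longrightarrow> s \<in> stepR \<Longrightarrow> r \<le> stepw t x s"
  by (auto simp: stepR_def)

lemma stepw_lbRo: "(\<And>e. r \<le> t e) \<Longrightarrow> min r 0 \<le> stepw t x s"
proof (cases s)
  case None then show ?thesis by simp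
next
  case (Some p)
  assume "\<And>e. r \<le> t e"
  then show ?thesis using Some by (cases p) (auto simp: min_le_iff_disj)
qed

lemma finite_paths: "finite (paths S n x)"
proof -
  have "paths S n x \<subseteq> {xs. set xs \<subseteq> UNIV \<and> length xs = n}"
    by (auto simp: paths_def)
  moreover have "finite {xs. set xs \<subseteq> (UNIV :: 'a step set) \<and> length xs = n}"
    by (intro finite_lists_length_eq) simp
  ultimately show ?thesis by (rule finite_subset)
qed

lemma Gpt_lb:
  assumes "x \<in> reach S n" "\<And>ss. ss \<in> paths S n x \<Longrightarrow> b \<le> pathw t 0 ss"
  shows "b \<le> Gpt S t n x"
  unfolding Gpt_def using assms finite_paths[of S n x]
  by (subst Min_ge_iff) (auto simp: reach_def)

lemma reach0: "0 \<in> reach S 0"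
proof -
  have "[] \<in> paths S 0 0" by (simp add: paths_def)
  then show ?thesis by (auto simp: reach_def)
qed

lemma reach_snoc: "x \<in> reach S n \<Longrightarrow> s \<in> S \<Longrightarrow> x + stepv s \<in> reach S (Suc n)"
proof -
  assume "x \<in> reach S n" "s \<in> S"
  then obtain ss where ss: "ss \<in> paths S n x" by (auto simp: reach_def)
  then have "ss @ [s] \<in> paths S (Suc n) (x + stepv s)"
    using \<open>s \<in> S\<close> by (auto simp: paths_def endpt_append)
  then show ?thesis by (auto simp: reach_def)
qed

lemma reach_plus2: "x \<in> reach stepR n \<Longrightarrow> x \<in> reach stepR (n + 2)"
proof -
  assume x: "x \<in> reach stepR n"
  obtain i :: 'a where True by simp
  have "x + stepv (Some (i, True)) \<in> reach stepR (Suc n)"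
    by (rule reach_snoc[OF x]) (auto simp: stepR_def)
  then have A: "x + stepv (Some (i, True)) + stepv (Some (i, False)) \<in> reach stepR (Suc (Suc n))"
    by (rule reach_snoc) (auto simp: stepR_def)
  have B: "x + stepv (Some (i, True)) + stepv (Some (i, False)) = x" by simp
  have e: "n + 2 = Suc (Suc n)" by simp
  from A show ?thesis unfolding B e .
qed

lemma reach_plus2k: "x \<in> reach stepR n \<Longrightarrow> x \<in> reach stepR (n + 2 * j)"
proof (induction j)
  case 0 then show ?case by simp
next
  case (Suc j)
  then have "x \<in> reach stepR (n + 2 * j + 2)" by (intro reach_plus2) auto
  then show ?case by (simp add: algebra_simps)
qed

definition il1 :: "int ^ 'n::finite \<Rightarrow> int" where
  "il1 x = (\<Sum>i\<in>UNIV. \<bar>x $ i\<bar>)"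

lemma reach_il1: "il1 x = int m \<Longrightarrow> x \<in> reach stepR m"
proof (induction m arbitrary: x)
  case 0
  then have "\<forall>i\<in>UNIV. \<bar>x $ i\<bar> = 0"
    unfolding il1_def by (subst sum_nonneg_eq_0_iff[symmetric]) auto
  then have "x = 0" by (simp add: vec_eq_iff)
  then show ?case using reach0 by simp
next
  case (Suc m)
  have "x \<noteq> 0" using Suc.prems by (auto simp: il1_def)
  then obtain i where i: "x $ i \<noteq> 0" by (auto simp: vec_eq_iff)
  define s where "s = Some (i, x $ i > 0)"
  define y where "y = x - stepv s"
  have comp: "\<bar>y $ j\<bar> = \<bar>x $ j\<bar> - (if j = i then 1 else 0)" for j
    using i by (auto simp: y_def s_def unitv_def)
  have "il1 y = il1 x - 1"
    unfolding il1_def comp by (simp add: sum_subtractf)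
  then have "il1 y = int m" using Suc.prems by simp
  then have "y \<in> reach stepR m" by (rule Suc.IH)
  then have "y + stepv s \<in> reach stepR (Suc m)"
    by (intro reach_snoc) (auto simp: stepR_def s_def)
  then show ?case by (simp add: y_def)
qed

lemma paths_mono: "S \<subseteq> S' \<Longrightarrow> reach S n \<subseteq> reach S' n"
  by (auto simp: reach_def paths_def)

definition trz :: "real \<Rightarrow> int" where
  "trz r = (if 0 \<le> r then \<lfloor>r\<rfloor> else - \<lfloor>- r\<rfloor>)"

lemma trz_abs: "\<bar>real_of_int (trz r)\<bar> \<le> \<bar>r\<bar>"
proof (cases "0 \<le> r")
  case True
  have "0 \<le> \<lfloor>r\<rfloor>" using True by simp
  moreover have "real_of_int \<lfloor>r\<rfloor> \<le> r" by (rule of_int_floor_le)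
  ultimately show ?thesis using True by (simp add: trz_def)
next
  case False
  have "0 \<le> \<lfloor>-r\<rfloor>" using False by simp
  moreover have "real_of_int \<lfloor>-r\<rfloor> \<le> -r" by (rule of_int_floor_le)
  ultimately show ?thesis using False by (simp add: trz_def)
qed

lemma trz_err: "\<bar>real_of_int (trz r) - r\<bar> \<le> 1"
proof -
  have a: "real_of_int \<lfloor>r\<rfloor> \<le> r" "r < real_of_int \<lfloor>r\<rfloor> + 1"
    by (rule of_int_floor_le, rule real_of_int_floor_add_one_gt)
  have b: "real_of_int \<lfloor>-r\<rfloor> \<le> -r" "-r < real_of_int \<lfloor>-r\<rfloor> + 1"
    by (rule of_int_floor_le, rule real_of_int_floor_add_one_gt)
  show ?thesis
  proof (cases "0 \<le> r")
    case True
    then have t: "real_of_int (trz r) = real_of_int \<lfloor>r\<rfloor>" by (simp add: trz_def)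
    show ?thesis unfolding t abs_le_iff using a by linarith
  next
    case False
    then have t: "real_of_int (trz r) = - real_of_int \<lfloor>-r\<rfloor>" by (simp add: trz_def)
    show ?thesis unfolding t abs_le_iff using b by linarith
  qed
qed

lemma trz_lim: "(\<lambda>n. real_of_int (trz (real n * a)) / real n) \<longlonglongrightarrow> a"
proof (rule tendsto_sandwich[of "\<lambda>n. a - 1 / real n" _ _ "\<lambda>n. a + 1 / real n"])
  have ev: "\<forall>\<^sub>F n in sequentially. n > (0::nat)" by (rule eventually_gt_at_top)
  have b: "real_of_int (trz (real n * a)) / real n - a \<le> 1 / real n \<and>
           a - real_of_int (trz (real n * a)) / real n \<le> 1 / real n" if "n > 0" for n
  proof -
    define q where "q = real_of_int (trz (real n * a))"
    have np: "real n > 0" using that by simp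
    have e1: "q / real n - a = (q - real n * a) / real n"
      using np by (simp add: diff_divide_distrib)
    have e2: "a - q / real n = (real n * a - q) / real n"
      using np by (simp add: diff_divide_distrib)
    have h: "q - real n * a \<le> 1" "real n * a - q \<le> 1"
      using trz_err[of "real n * a"] unfolding q_def[symmetric] abs_le_iff by linarith+
    have "(q - real n * a) / real n \<le> 1 / real n"
      using h(1) np by (rule divide_right_mono[OF _ less_imp_le])
    moreover have "(real n * a - q) / real n \<le> 1 / real n"
      using h(2) np by (rule divide_right_mono[OF _ less_imp_le])
    ultimately show ?thesis unfolding q_def[symmetric] e1 e2 by simp
  qed
  show "\<forall>\<^sub>F n in sequentially. a - 1 / real n \<le> real_of_int (trz (real n * a)) / real n"
    using ev
  proof eventually_elim
    case (elim n) then show ?case using b[OF elim] by linarith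
  qed
  show "\<forall>\<^sub>F n in sequentially. real_of_int (trz (real n * a)) / real n \<le> a + 1 / real n"
    using ev
  proof eventually_elim
    case (elim n) then show ?case using b[OF elim] by linarith
  qed
  show "(\<lambda>n. a - 1 / real n) \<longlonglongrightarrow> a"
    using tendsto_diff[OF tendsto_const lim_inverse_n'] by simp
  show "(\<lambda>n. a + 1 / real n) \<longlonglongrightarrow> a"
    using tendsto_add[OF tendsto_const lim_inverse_n'] by simp
qed



definition shapeP :: "'n::finite step set \<Rightarrow> ('n edge \<Rightarrow> real) \<Rightarrow> (real ^ 'n \<Rightarrow> real) \<Rightarrow> bool" where
  "shapeP S t g \<longleftrightarrow> (\<forall>\<xi> \<alpha> (k::nat \<Rightarrow> nat) (x::nat \<Rightarrow> int ^ 'n).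
        \<alpha> > l1norm \<xi> \<and> filterlim k at_top sequentially
        \<and> (\<lambda>n. real (k n) / real n) \<longlonglongrightarrow> \<alpha>
        \<and> (\<forall>n. x n \<in> reach S (k n))
        \<and> (\<lambda>n. (1 / real n) *\<^sub>R toR (x n)) \<longlonglongrightarrow> \<xi>
        \<longrightarrow> (\<lambda>n. Gpt S t (k n) (x n) / real n) \<longlonglongrightarrow> \<alpha> * g ((1 / \<alpha>) *\<^sub>R \<xi>))"

lemma lb_from_shape:
  fixes g :: "real ^ 'n::finite \<Rightarrow> real" and t :: "'n edge \<Rightarrow> real"
  assumes H: "shapeP S t g"
    and RS: "\<And>n. reach stepR n \<subseteq> reach S n"
    and pl: "\<And>ss. set ss \<subseteq> S \<Longrightarrow> real (length ss) * m \<le> pathw t 0 ss"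
    and xi: "\<xi> \<in> intU"
  shows "m \<le> g \<xi>"
proof -
  define xs where "xs n = (\<chi> i. 2 * trz (real n * \<xi> $ i))" for n
  define c where "c n = nat (\<Sum>i\<in>UNIV. \<bar>trz (real n * \<xi> $ i)\<bar>)" for n
  have il: "il1 (xs n) = int (2 * c n)" for n
  proof -
    have "il1 (xs n) = 2 * (\<Sum>i\<in>UNIV. \<bar>trz (real n * \<xi> $ i)\<bar>)"
      by (simp add: il1_def xs_def abs_mult sum_distrib_left)
    moreover have "0 \<le> (\<Sum>i\<in>UNIV. \<bar>trz (real n * \<xi> $ i)\<bar>)" by (simp add: sum_nonneg)
    ultimately show ?thesis by (simp add: c_def)
  qed
  have cn: "c n \<le> n" for n
  proof -
    have "real_of_int (\<Sum>i\<in>UNIV. \<bar>trz (real n * \<xi> $ i)\<bar>) = (\<Sum>i\<in>UNIV. \<bar>real_of_int (trz (real n * \<xi> $ i))\<bar>)"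
      by simp
    also have "\<dots> \<le> (\<Sum>i\<in>UNIV. \<bar>real n * \<xi> $ i\<bar>)"
      by (intro sum_mono trz_abs)
    also have "\<dots> = real n * l1norm \<xi>"
      by (simp add: l1norm_def abs_mult sum_distrib_left)
    also have "\<dots> \<le> real n * 1"
      using xi l1norm_nonneg[of \<xi>] by (intro mult_left_mono) (auto simp: intU_def)
    finally have "(\<Sum>i\<in>UNIV. \<bar>trz (real n * \<xi> $ i)\<bar>) \<le> int n" by linarith
    then show ?thesis by (simp add: c_def)
  qed
  have reachx: "xs n \<in> reach S (2 * n)" for n
  proof -
    have "xs n \<in> reach stepR (2 * c n)" by (rule reach_il1[OF il])
    then have "xs n \<in> reach stepR (2 * c n + 2 * (n - c n))" by (rule reach_plus2k)
    moreover have "2 * c n + 2 * (n - c n) = 2 * n" using cn[of n] by simp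
    ultimately show ?thesis using RS by auto
  qed
  have conv: "(\<lambda>n. (1 / real n) *\<^sub>R toR (xs n)) \<longlonglongrightarrow> 2 *\<^sub>R \<xi>"
  proof (rule vec_tendstoI)
    fix i
    have "(\<lambda>n. 2 * (real_of_int (trz (real n * \<xi> $ i)) / real n)) \<longlonglongrightarrow> 2 * \<xi> $ i"
      by (intro tendsto_mult tendsto_const trz_lim)
    then show "(\<lambda>n. ((1 / real n) *\<^sub>R toR (xs n)) $ i) \<longlonglongrightarrow> (2 *\<^sub>R \<xi>) $ i"
      by (simp add: toR_def xs_def)
  qed
  have kl: "filterlim (\<lambda>n::nat. 2 * n) at_top sequentially"
    by (intro filterlim_subseq) (simp add: strict_mono_def)
  have ev: "\<forall>\<^sub>F n in sequentially. n > (0::nat)" by (rule eventually_gt_at_top)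
  have kr: "(\<lambda>n. real (2 * n) / real n) \<longlonglongrightarrow> 2"
  proof (rule Lim_transform_eventually[OF tendsto_const])
    show "\<forall>\<^sub>F n in sequentially. 2 = real (2 * n) / real n"
      using ev by eventually_elim simp
  qed
  have a2: "l1norm (2 *\<^sub>R \<xi>) < 2"
    using xi by (simp add: l1norm_scale intU_def)
  have lim: "(\<lambda>n. Gpt S t (2 * n) (xs n) / real n) \<longlonglongrightarrow> 2 * g ((1 / 2) *\<^sub>R (2 *\<^sub>R \<xi>))"
    using H[unfolded shapeP_def] a2 kl kr reachx conv by blast
  then have lim': "(\<lambda>n. Gpt S t (2 * n) (xs n) / real n) \<longlonglongrightarrow> 2 * g \<xi>" by simp
  have "2 * m \<le> 2 * g \<xi>"
  proof (rule tendsto_lowerbound[OF lim'])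
    show "\<forall>\<^sub>F n in sequentially. 2 * m \<le> Gpt S t (2 * n) (xs n) / real n"
      using ev
    proof eventually_elim
      case (elim n)
      have "real (2 * n) * m \<le> Gpt S t (2 * n) (xs n)"
      proof (rule Gpt_lb[OF reachx])
        fix ss assume "ss \<in> paths S (2 * n) (xs n)"
        then have "set ss \<subseteq> S" "length ss = 2 * n" by (auto simp: paths_def)
        then show "real (2 * n) * m \<le> pathw t 0 ss" using pl[of ss] by simp
      qed
      then have "real n * (2 * m) \<le> Gpt S t (2 * n) (xs n)" by (simp add: algebra_simps)
      then show ?case using elim by (simp add: pos_le_divide_eq mult.commute)
    qed
  qed simp
  then show ?thesis by simp
qed

lemma is_shape_fn_alt: "is_shape_fn M T S g \<longleftrightarrow> (AE \<omega> in M. shapeP S (\<lambda>e. T e \<omega>) g)"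
  unfolding is_shape_fn_def shapeP_def by (rule refl)

lemma AE_ex3:
  assumes "prob_space M" "AE \<omega> in M. A \<omega>" "AE \<omega> in M. B \<omega>" "AE \<omega> in M. C \<omega>"
  shows "\<exists>\<omega>. A \<omega> \<and> B \<omega> \<and> C \<omega>"
proof (rule ccontr)
  assume n: "\<not> (\<exists>\<omega>. A \<omega> \<and> B \<omega> \<and> C \<omega>)"
  have "AE \<omega> in M. False" using assms(2-4) by eventually_elim (use n in blast)
  then show False using prob_space.AE_False[OF assms(1)] by simp
qed

theorem theorem2p10:
  fixes M :: "'a measure" and T :: "'n::finite edge \<Rightarrow> 'a \<Rightarrow> real"
    and g go :: "real ^ 'n \<Rightarrow> real" and e0 :: "'n edge"
  assumes d2: "CARD('n) \<ge> 2"
    and P: "prob_space M"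
    and indep: "prob_space.indep_vars M (\<lambda>_. borel) T UNIV"
    and ident: "\<And>e e'. distr M borel (T e) = distr M borel (T e')"
    and r0_fin: "- esssup M (\<lambda>\<omega>. - ereal (T e0 \<omega>)) \<noteq> -\<infinity>"
    and moment: "(\<integral>\<^sup>+ \<omega>. ennreal ((Min ((\<lambda>e. max 0 (T e \<omega>)) ` edges0)) ^ CARD('n)) \<partial>M) < \<infinity>"
    and g_shape: "is_shape_fn M T stepR g"
    and g_cvx: "convex_on intU g" and g_cont: "continuous_on intU g"
    and go_shape: "is_shape_fn M T stepRo go"
    and go_cvx: "convex_on intU go" and go_cont: "continuous_on intU go"
  shows "(\<forall>\<xi>. l1norm \<xi> = 1 \<longrightarrow>
            (\<exists>L. ((\<lambda>t. ereal (g (t *\<^sub>R \<xi>))) \<longlongrightarrow> L) (at_left 1))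
          \<and> (\<exists>L. ((\<lambda>t. ereal (go (t *\<^sub>R \<xi>))) \<longlongrightarrow> L) (at_left 1)))
       \<and> (\<forall>\<xi>\<in>Uset. - esssup M (\<lambda>\<omega>. - ereal (T e0 \<omega>)) \<le> ext_shape g \<xi>)
       \<and> (\<forall>\<xi>\<in>Uset. min (- esssup M (\<lambda>\<omega>. - ereal (T e0 \<omega>))) 0 \<le> ext_shape go \<xi>)
       \<and> convex_ereal_on Uset (ext_shape g) \<and> lsc_on Uset (ext_shape g)
       \<and> convex_ereal_on Uset (ext_shape go) \<and> lsc_on Uset (ext_shape go)"
proof -
  define r0 where "r0 = - esssup M (\<lambda>\<omega>. - ereal (T e0 \<omega>))"
  have meas: "T e \<in> M \<rightarrow>\<^sub>M borel" for e
  proof -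
    have "\<forall>i\<in>UNIV. T i \<in> M \<rightarrow>\<^sub>M borel"
      using prob_space.indep_vars_def2[OF P, THEN iffD1, OF indep] by (rule conjunct1)
    then show ?thesis by blast
  qed
  have AE0: "AE \<omega> in M. r0 \<le> ereal (T e0 \<omega>)"
    using esssup_AE[of "\<lambda>\<omega>. - ereal (T e0 \<omega>)" M]
  proof eventually_elim
    case (elim \<omega>)
    then show ?case unfolding r0_def by (subst ereal_uminus_le_reorder) simp
  qed
  have mset: "{y \<in> space borel. r0 \<le> ereal y} \<in> sets borel" by measurable
  have AEe: "AE \<omega> in M. r0 \<le> ereal (T e \<omega>)" for e
  proof -
    have "AE y in distr M borel (T e0). r0 \<le> ereal y"
      using AE0 by (subst AE_distr_iff[OF meas mset])
    then have "AE y in distr M borel (T e). r0 \<le> ereal y" unfolding ident[of e e0] .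
    then show ?thesis by (subst (asm) AE_distr_iff[OF meas mset])
  qed
  have AEall: "AE \<omega> in M. \<forall>e. r0 \<le> ereal (T e \<omega>)"
    using AEe by (subst AE_all_countable) auto
  obtain \<omega>0 where "r0 \<le> ereal (T e0 \<omega>0)" using AE_ex3[OF P AE0 AE0 AE0] by blast
  then have "r0 \<noteq> \<infinity>" by auto
  then obtain r where r: "r0 = ereal r" using r0_fin unfolding r0_def[symmetric] by (cases r0) auto
  obtain \<omega> where w: "(\<forall>e. r0 \<le> ereal (T e \<omega>)) \<and> shapeP stepR (\<lambda>e. T e \<omega>) g
      \<and> shapeP stepRo (\<lambda>e. T e \<omega>) go"
    using AE_ex3[OF P AEall g_shape[unfolded is_shape_fn_alt] go_shape[unfolded is_shape_fn_alt]]
    by blast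
  have tr: "r \<le> T e \<omega>" for e
  proof -
    have "r0 \<le> ereal (T e \<omega>)" using w by blast
    then show ?thesis using r by simp
  qed
  have lbg: "r \<le> g \<xi>" if "\<xi> \<in> intU" for \<xi>
  proof (rule lb_from_shape[OF _ _ _ that])
    show "shapeP stepR (\<lambda>e. T e \<omega>) g" using w by blast
  next
    fix ss :: "'n step list" assume "set ss \<subseteq> stepR"
    then show "real (length ss) * r \<le> pathw (\<lambda>e. T e \<omega>) 0 ss"
      by (intro pathw_lb stepw_lbR tr) auto
  qed simp
  have lbgo: "min r 0 \<le> go \<xi>" if "\<xi> \<in> intU" for \<xi>
  proof (rule lb_from_shape[OF _ _ _ that])
    show "shapeP stepRo (\<lambda>e. T e \<omega>) go" using w by blast
  next
    fix ss :: "'n step list" assume "set ss \<subseteq> stepRo"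
    then show "real (length ss) * min r 0 \<le> pathw (\<lambda>e. T e \<omega>) 0 ss"
      by (intro pathw_lb stepw_lbRo tr)
  next
    fix n show "reach stepR n \<subseteq> reach stepRo n" by (rule paths_mono) (simp add: stepRo_def)
  qed
  note G = ext_props[OF g_cvx g_cont lbg]
  note GO = ext_props[OF go_cvx go_cont lbgo]
  have mr: "min r0 0 = ereal (min r 0)" using r by (simp add: min_def)
  have c1: "\<forall>\<xi>. l1norm \<xi> = 1 \<longrightarrow>
            (\<exists>L. ((\<lambda>t. ereal (g (t *\<^sub>R \<xi>))) \<longlongrightarrow> L) (at_left 1))
          \<and> (\<exists>L. ((\<lambda>t. ereal (go (t *\<^sub>R \<xi>))) \<longlongrightarrow> L) (at_left 1))"
    using G(1) GO(1) by blast
  have c2: "\<forall>\<xi>\<in>Uset. r0 \<le> ext_shape g \<xi>" using G(2) r by simp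
  have c3: "\<forall>\<xi>\<in>Uset. min r0 0 \<le> ext_shape go \<xi>" using GO(2) mr by simp
  show ?thesis unfolding r0_def[symmetric]
    using c1 c2 c3 G(3) G(4) GO(3) GO(4) by (intro conjI)
qed

end
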